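(* Let $\rho_0,\rho_1,\dots,\rho_n$ be density matrices on a finite-dimensional complex Hilbert space with $\rho_j\rho_k=0$ for all $j\ne k$ in $\{0,1,\dots,n\}$. Let $p_1,\dots,p_n\ge0$ with $\sum_{j=1}^n p_j=1$, let $\epsilon\in[0,1]$, and set $\sigma_j=\epsilon\rho_0+(1-\epsilon)\rho_j$ for $j=1,\dots,n$, $\rho=\sum_{j=1}^n p_j\rho_j$ and $\sigma=\sum_{j=1}^n p_j\sigma_j=\epsilon\rho_0+(1-\epsilon)\rho$. Then for each $\mathcal{F}\in\{\mathcal{F}_1,\mathcal{F}_Q,\mathcal{F}_A\}$, $$\sum_{j=1}^n p_j\,\mathcal{F}(\rho_j,\sigma_j)=\mathcal{F}(\rho,\sigma)=1-\epsilon.$$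
   Context: A density matrix is a positive semidefinite operator of unit trace; $\sqrt{\cdot}$ is the positive semidefinite square root. $\mathcal{F}_1(\rho,\sigma)=(\operatorname{tr}\sqrt{\sqrt{\rho}\sigma\sqrt{\rho}})^2$ (Uhlmann–Jozsa fidelity); $\mathcal{F}_Q(\rho,\sigma)=\min_{0\le s\le1}\operatorname{tr}(\rho^s\sigma^{1-s})$, with powers defined by spectral calculus on the support (so $\rho^0$ is the projector onto the support of $\rho$); $\mathcal{F}_A(\rho,\sigma)=[\operatorname{tr}(\sqrt{\rho}\sqrt{\sigma})]^2$ ($A$-fidelity). *)

theory Defs
  imports Complex_Main "Jordan_Normal_Form.Matrix"
begin

definition adj :: "complex mat \<Rightarrow> complex mat" where
  "adj A = mat (dim_col A) (dim_row A) (\<lambda>(i,j). cnj (A $$ (j,i)))"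

definition tr :: "complex mat \<Rightarrow> complex" where
  "tr A = (\<Sum>i<dim_row A. A $$ (i,i))"

definition psd :: "nat \<Rightarrow> complex mat \<Rightarrow> bool" where
  "psd d A \<longleftrightarrow> A \<in> carrier_mat d d \<and> adj A = A \<and>
     (\<forall>v \<in> carrier_vec d. 0 \<le> Re (\<Sum>i<d. cnj (v $ i) * (A *\<^sub>v v) $ i))"

definition density :: "nat \<Rightarrow> complex mat \<Rightarrow> bool" where
  "density d A \<longleftrightarrow> psd d A \<and> tr A = 1"

definition unitary :: "nat \<Rightarrow> complex mat \<Rightarrow> bool" where
  "unitary d U \<longleftrightarrow> U \<in> carrier_mat d d \<and> adj U * U = 1\<^sub>m d"

definition rdiag :: "nat \<Rightarrow> (nat \<Rightarrow> real) \<Rightarrow> complex mat" where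
  "rdiag d f = mat d d (\<lambda>(i,j). if i = j then complex_of_real (f i) else 0)"

definition psd_sqrt :: "complex mat \<Rightarrow> complex mat" where
  "psd_sqrt A = (THE B. psd (dim_row A) B \<and> B * B = A)"

text \<open>Real power by spectral calculus on the support: eigenvalue 0 is sent to 0
  (note that in Isabelle 0 powr s = 0 for every s, while x powr 0 = 1 for x > 0),
  so mat_powr A 0 is the projector onto the support of A.\<close>
definition mat_powr :: "complex mat \<Rightarrow> real \<Rightarrow> complex mat" where
  "mat_powr A s = (THE B. \<exists>U (l :: nat \<Rightarrow> real). unitary (dim_row A) U \<and>
      A = U * rdiag (dim_row A) l * adj U \<and>
      B = U * rdiag (dim_row A) (\<lambda>i. l i powr s) * adj U)"

definition fid1 :: "complex mat \<Rightarrow> complex mat \<Rightarrow> real" where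
  "fid1 \<rho> \<sigma> = (Re (tr (psd_sqrt (psd_sqrt \<rho> * \<sigma> * psd_sqrt \<rho>)))) ^ 2"

definition fidQ :: "complex mat \<Rightarrow> complex mat \<Rightarrow> real" where
  "fidQ \<rho> \<sigma> = Inf ((\<lambda>s. Re (tr (mat_powr \<rho> s * mat_powr \<sigma> (1 - s)))) ` {0..1})"

definition fidA :: "complex mat \<Rightarrow> complex mat \<Rightarrow> real" where
  "fidA \<rho> \<sigma> = (Re (tr (psd_sqrt \<rho> * psd_sqrt \<sigma>))) ^ 2"

definition wsum :: "nat \<Rightarrow> (nat \<Rightarrow> real) \<Rightarrow> (nat \<Rightarrow> complex mat) \<Rightarrow> nat set \<Rightarrow> complex mat" where
  "wsum d p A J = mat d d (\<lambda>(i,k). \<Sum>j\<in>J. complex_of_real (p j) * A j $$ (i,k))"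

end

theory Submission
  imports Defs "Jordan_Normal_Form.Determinant" "Jordan_Normal_Form.Schur_Decomposition"
begin

lemma adj_dims[simp]: "dim_row (adj A) = dim_col A" "dim_col (adj A) = dim_row A"
  by (auto simp: adj_def)
lemma adj_carrier[simp]: "A \<in> carrier_mat n m \<Longrightarrow> adj A \<in> carrier_mat m n"
  by (auto simp: adj_def)
lemma adj_index[simp]: "i < dim_col A \<Longrightarrow> j < dim_row A \<Longrightarrow> adj A $$ (i,j) = cnj (A $$ (j,i))"
  by (simp add: adj_def)
lemma adj_adj[simp]: "adj (adj A) = A"
  by (rule eq_matI) auto
lemma adj_mult: "A \<in> carrier_mat n m \<Longrightarrow> B \<in> carrier_mat m k \<Longrightarrow> adj (A * B) = adj B * adj A"
  by (rule eq_matI) (auto simp: scalar_prod_def cnj_sum mult.commute intro!: sum.cong)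
lemma adj_add: "A \<in> carrier_mat n m \<Longrightarrow> B \<in> carrier_mat n m \<Longrightarrow> adj (A + B) = adj A + adj B"
  by (rule eq_matI) auto
lemma adj_smult: "adj (c \<cdot>\<^sub>m A) = cnj c \<cdot>\<^sub>m adj A"
  by (rule eq_matI) auto
lemma adj_one[simp]: "adj (1\<^sub>m n) = 1\<^sub>m n"
  by (rule eq_matI) auto
lemma adj_zero[simp]: "adj (0\<^sub>m n m) = 0\<^sub>m m n"
  by (rule eq_matI) auto

lemma rdiag_carrier[simp]: "rdiag n f \<in> carrier_mat n n"
  by (simp add: rdiag_def)
lemma rdiag_dims[simp]: "dim_row (rdiag n f) = n" "dim_col (rdiag n f) = n"
  by (simp_all add: rdiag_def)
lemma rdiag_index[simp]: "i < n \<Longrightarrow> j < n \<Longrightarrow> rdiag n f $$ (i,j) = (if i = j then complex_of_real (f i) else 0)"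
  by (simp add: rdiag_def)
lemma adj_rdiag[simp]: "adj (rdiag n f) = rdiag n f"
  by (rule eq_matI) auto

lemma mult_rdiag_index[simp]: assumes "A \<in> carrier_mat m n" "i < m" "j < n"
  shows "(A * rdiag n f) $$ (i,j) = A $$ (i,j) * complex_of_real (f j)"
proof -
  have "(A * rdiag n f) $$ (i,j) = (\<Sum>k\<in>{0..<n}. A $$ (i,k) * (if k = j then complex_of_real (f k) else 0))"
    using assms by (auto simp: scalar_prod_def intro!: sum.cong)
  also have "\<dots> = (\<Sum>k\<in>{0..<n}. if k = j then A $$ (i,k) * complex_of_real (f k) else 0)"
    by (rule sum.cong) auto
  also have "\<dots> = A $$ (i,j) * complex_of_real (f j)" using assms by simp
  finally show ?thesis .
qed

lemma rdiag_mult_index[simp]: assumes "A \<in> carrier_mat n m" "i < n" "j < m"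
  shows "(rdiag n f * A) $$ (i,j) = complex_of_real (f i) * A $$ (i,j)"
proof -
  have "(rdiag n f * A) $$ (i,j) = (\<Sum>k\<in>{0..<n}. (if i = k then complex_of_real (f i) else 0) * A $$ (k,j))"
    using assms by (auto simp: scalar_prod_def intro!: sum.cong)
  also have "\<dots> = (\<Sum>k\<in>{0..<n}. if i = k then complex_of_real (f i) * A $$ (k,j) else 0)"
    by (rule sum.cong) auto
  also have "\<dots> = complex_of_real (f i) * A $$ (i,j)" using assms by simp
  finally show ?thesis .
qed

lemma rdiag_rdiag: "rdiag n f * rdiag n g = rdiag n (\<lambda>i. f i * g i)"
  by (rule eq_matI) (auto simp: mult_rdiag_index[OF rdiag_carrier] simp del: index_mult_mat(1))

lemma rdiag_comm:
  assumes X: "X \<in> carrier_mat n n" and h: "rdiag n m * X = X * rdiag n \<mu>"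
  shows "rdiag n (\<lambda>i. f (m i)) * X = X * rdiag n (\<lambda>i. f (\<mu> i))"
proof (rule eq_matI)
  fix i j assume i: "i < dim_row (X * rdiag n (\<lambda>i. f (\<mu> i)))" and j: "j < dim_col (X * rdiag n (\<lambda>i. f (\<mu> i)))"
  hence i: "i < n" and j: "j < n" using X by auto
  from arg_cong[OF h, of "\<lambda>M. M $$ (i,j)"] i j X
  have e: "complex_of_real (m i) * X $$ (i,j) = X $$ (i,j) * complex_of_real (\<mu> j)" by (simp del: index_mult_mat(1))
  show "(rdiag n (\<lambda>i. f (m i)) * X) $$ (i,j) = (X * rdiag n (\<lambda>i. f (\<mu> i))) $$ (i,j)"
  proof (cases "X $$ (i,j) = 0")
    case True thus ?thesis using i j X by (simp del: index_mult_mat(1))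
  next
    case False
    with e have "m i = \<mu> j" by (simp add: mult.commute)
    hence "f (m i) = f (\<mu> j)" by simp
    thus ?thesis using i j X by (simp add: mult.commute del: index_mult_mat(1))
  qed
qed (use X in auto)

lemma unitary_carrier: "unitary n U \<Longrightarrow> U \<in> carrier_mat n n" by (simp add: unitary_def)
lemma unitary_left: "unitary n U \<Longrightarrow> adj U * U = 1\<^sub>m n" by (simp add: unitary_def)
lemma unitary_right: assumes "unitary n U" shows "U * adj U = 1\<^sub>m n"
  using mat_mult_left_right_inverse[of "adj U" n U] assms by (auto simp: unitary_def)

lemma sq_mult_carrier[simp]: "A \<in> carrier_mat n n \<Longrightarrow> B \<in> carrier_mat n n \<Longrightarrow> A * B \<in> carrier_mat n n"
  by auto
lemma sq_adj_carrier[simp]: "A \<in> carrier_mat n n \<Longrightarrow> adj A \<in> carrier_mat n n"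
  by auto


lemma fc_eigen:
  assumes V: "unitary n V" and A: "A = V * rdiag n m * adj V" and W: "W \<in> carrier_mat n n"
    and AW: "A * W = W * rdiag n \<mu>"
  shows "V * rdiag n (\<lambda>i. f (m i)) * adj V * W = W * rdiag n (\<lambda>i. f (\<mu> i))"
proof -
  note assoc_n = assoc_mult_mat[of _ n n _ n _ n]
  have Vc: "V \<in> carrier_mat n n" using V unitary_carrier by blast
  have VV: "adj V * V = 1\<^sub>m n" "V * adj V = 1\<^sub>m n" using V unitary_left unitary_right by auto
  define X where "X = adj V * W"
  have Xc: "X \<in> carrier_mat n n" using Vc W by (simp add: X_def)
  have "adj V * A = rdiag n m * adj V"
  proof -
    have "adj V * A = (adj V * V) * rdiag n m * adj V" using Vc by (simp add: A assoc_n del: assoc_mult_mat)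
    thus ?thesis using VV Vc by simp
  qed
  hence "rdiag n m * X = X * rdiag n \<mu>"
  proof -
    assume h: "adj V * A = rdiag n m * adj V"
    have Ac: "A \<in> carrier_mat n n" using Vc by (simp add: A)
    have "rdiag n m * X = (rdiag n m * adj V) * W" using Vc W by (simp add: X_def assoc_n del: assoc_mult_mat)
    also have "\<dots> = adj V * (A * W)" using Vc W Ac by (simp add: h[symmetric] assoc_n del: assoc_mult_mat)
    also have "\<dots> = X * rdiag n \<mu>" using Vc W by (simp add: AW X_def assoc_n del: assoc_mult_mat)
    finally show ?thesis .
  qed
  from rdiag_comm[OF Xc this, of f]
  have c: "rdiag n (\<lambda>i. f (m i)) * X = X * rdiag n (\<lambda>i. f (\<mu> i))" .
  have "V * rdiag n (\<lambda>i. f (m i)) * adj V * W = V * (rdiag n (\<lambda>i. f (m i)) * X)"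
    using Vc W by (simp add: X_def assoc_n del: assoc_mult_mat)
  also have "\<dots> = V * (X * rdiag n (\<lambda>i. f (\<mu> i)))" by (simp add: c)
  also have "\<dots> = (V * adj V) * W * rdiag n (\<lambda>i. f (\<mu> i))"
    using Vc W by (simp add: X_def assoc_n del: assoc_mult_mat)
  also have "\<dots> = W * rdiag n (\<lambda>i. f (\<mu> i))" using VV W by simp
  finally show ?thesis .
qed

lemma fc_unique:
  assumes U: "unitary n U" and V: "unitary n V"
    and eq: "U * rdiag n l * adj U = V * rdiag n m * adj V"
  shows "U * rdiag n (\<lambda>i. f (l i)) * adj U = V * rdiag n (\<lambda>i. f (m i)) * adj V"
proof -
  note assoc_n = assoc_mult_mat[of _ n n _ n _ n]
  have Uc: "U \<in> carrier_mat n n" and Vc: "V \<in> carrier_mat n n" using U V unitary_carrier by auto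
  have UU: "adj U * U = 1\<^sub>m n" "U * adj U = 1\<^sub>m n" using U unitary_left unitary_right by auto
  have "(V * rdiag n m * adj V) * U = U * rdiag n l * (adj U * U)"
    using Uc by (simp add: eq[symmetric] assoc_n del: assoc_mult_mat)
  also have "\<dots> = U * rdiag n l" using UU Uc by simp
  finally have AU: "(V * rdiag n m * adj V) * U = U * rdiag n l" .
  have e: "V * rdiag n (\<lambda>i. f (m i)) * adj V * U = U * rdiag n (\<lambda>i. f (l i))"
    by (rule fc_eigen[OF V refl Uc AU])
  have "V * rdiag n (\<lambda>i. f (m i)) * adj V = V * rdiag n (\<lambda>i. f (m i)) * adj V * (U * adj U)"
    using UU Vc by simp
  also have "\<dots> = (V * rdiag n (\<lambda>i. f (m i)) * adj V * U) * adj U"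
    using Uc Vc by (simp add: assoc_n del: assoc_mult_mat)
  also have "\<dots> = U * rdiag n (\<lambda>i. f (l i)) * adj U" by (simp add: e)
  finally show ?thesis by simp
qed

lemma tr_mult_comm: assumes "A \<in> carrier_mat n m" "B \<in> carrier_mat m n"
  shows "tr (A * B) = tr (B * A)"
proof -
  have "tr (A * B) = (\<Sum>i<n. \<Sum>k<m. A $$ (i,k) * B $$ (k,i))"
    using assms by (simp add: tr_def scalar_prod_def atLeast0LessThan)
  also have "\<dots> = (\<Sum>k<m. \<Sum>i<n. B $$ (k,i) * A $$ (i,k))"
    by (subst sum.swap) (simp add: mult.commute)
  also have "\<dots> = tr (B * A)"
    using assms by (simp add: tr_def scalar_prod_def atLeast0LessThan)
  finally show ?thesis .
qed

lemma tr_add: "A \<in> carrier_mat n n \<Longrightarrow> B \<in> carrier_mat n n \<Longrightarrow> tr (A + B) = tr A + tr B"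
  by (simp add: tr_def sum.distrib)
lemma tr_smult: "A \<in> carrier_mat n n \<Longrightarrow> tr (c \<cdot>\<^sub>m A) = c * tr A"
  unfolding tr_def by (simp add: sum_distrib_left)
lemma tr_rdiag: "tr (rdiag n l) = (\<Sum>i<n. complex_of_real (l i))"
  by (simp add: tr_def)

lemma tr_diag_form: assumes U: "unitary n U"
  shows "tr (U * rdiag n l * adj U) = (\<Sum>i<n. complex_of_real (l i))"
proof -
  have Uc: "U \<in> carrier_mat n n" using U unitary_carrier by auto
  have "tr (U * rdiag n l * adj U) = tr (adj U * (U * rdiag n l))"
    by (rule tr_mult_comm[of _ n n]) (use Uc in auto)
  also have "\<dots> = tr ((adj U * U) * rdiag n l)" using Uc by (simp add: assoc_mult_mat[of "adj U" n n U n "rdiag n l" n])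
  also have "\<dots> = tr (rdiag n l)" using unitary_left[OF U] by simp
  finally show ?thesis by (simp add: tr_rdiag)
qed

definition ip :: "nat \<Rightarrow> complex vec \<Rightarrow> complex vec \<Rightarrow> complex" where
  "ip n v w = (\<Sum>i<n. cnj (v $ i) * w $ i)"

lemma mv_index: "A \<in> carrier_mat n m \<Longrightarrow> v \<in> carrier_vec m \<Longrightarrow> i < n \<Longrightarrow>
   (A *\<^sub>v v) $ i = (\<Sum>k<m. A $$ (i,k) * v $ k)"
  by (simp add: scalar_prod_def atLeast0LessThan)

lemma ip_adj: assumes M: "M \<in> carrier_mat n n" and v: "v \<in> carrier_vec n" and w: "w \<in> carrier_vec n"
  shows "ip n v (M *\<^sub>v w) = ip n (adj M *\<^sub>v v) w"
proof -
  have "ip n v (M *\<^sub>v w) = (\<Sum>i<n. \<Sum>k<n. cnj (v $ i) * M $$ (i,k) * w $ k)"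
    using assms by (simp add: ip_def scalar_prod_def atLeast0LessThan sum_distrib_left mult.assoc)
  also have "\<dots> = (\<Sum>k<n. \<Sum>i<n. cnj (v $ i) * M $$ (i,k) * w $ k)"
    by (rule sum.swap)
  also have "\<dots> = ip n (adj M *\<^sub>v v) w"
    using assms by (simp add: ip_def scalar_prod_def atLeast0LessThan sum_distrib_right sum_distrib_left mult_ac)
  finally show ?thesis .
qed

lemma rdiag_mv: "v \<in> carrier_vec n \<Longrightarrow> rdiag n l *\<^sub>v v = vec n (\<lambda>i. complex_of_real (l i) * v $ i)"
proof (rule eq_vecI)
  fix i assume v: "v \<in> carrier_vec n" and i: "i < dim_vec (vec n (\<lambda>i. complex_of_real (l i) * v $ i))"
  hence i: "i < n" by simp
  have "(rdiag n l *\<^sub>v v) $ i = (\<Sum>k<n. (if i = k then complex_of_real (l i) else 0) * v $ k)"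
    using v i by (simp add: scalar_prod_def atLeast0LessThan)
  also have "\<dots> = (\<Sum>k<n. if i = k then complex_of_real (l i) * v $ k else 0)"
    by (rule sum.cong) auto
  also have "\<dots> = complex_of_real (l i) * v $ i" using i by simp
  finally show "(rdiag n l *\<^sub>v v) $ i = vec n (\<lambda>i. complex_of_real (l i) * v $ i) $ i" using i by simp
qed simp

lemma psd_carrier: "psd n A \<Longrightarrow> A \<in> carrier_mat n n" by (simp add: psd_def)
lemma psd_herm: "psd n A \<Longrightarrow> adj A = A" by (simp add: psd_def)
lemma psd_qf: "psd n A \<Longrightarrow> v \<in> carrier_vec n \<Longrightarrow> 0 \<le> Re (ip n v (A *\<^sub>v v))"
  by (simp add: psd_def ip_def)

lemma aux_nonneg: "0 \<le> (c::real) \<Longrightarrow> 0 \<le> a * (c * a) + b * (c * b)"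
proof -
  assume c: "0 \<le> c"
  have "a * (c * a) + b * (c * b) = c * (a * a + b * b)" by (simp add: algebra_simps)
  thus ?thesis using c by simp
qed

lemma psd_diag:
  assumes U: "unitary n U" and l: "\<And>i. i < n \<Longrightarrow> 0 \<le> l i"
  shows "psd n (U * rdiag n l * adj U)"
proof -
  note assoc_n = assoc_mult_mat[of _ n n _ n _ n]
  have Uc: "U \<in> carrier_mat n n" using U unitary_carrier by auto
  have h: "adj (U * rdiag n l * adj U) = U * rdiag n l * adj U"
    using Uc by (simp add: adj_mult[of _ n n _ n] assoc_n del: assoc_mult_mat)
  { fix v :: "complex vec" assume v: "v \<in> carrier_vec n"
    define w where "w = adj U *\<^sub>v v"
    have w: "w \<in> carrier_vec n" using mult_mat_vec_carrier[OF sq_adj_carrier[OF Uc] v] by (simp add: w_def)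
    have "ip n v ((U * rdiag n l * adj U) *\<^sub>v v) = ip n v (U *\<^sub>v (rdiag n l *\<^sub>v w))"
      using Uc v w assoc_mult_mat_vec[of "U * rdiag n l" n n "adj U" n v] assoc_mult_mat_vec[of U n n "rdiag n l" n w]
      by (simp add: w_def)
    also have "\<dots> = ip n w (rdiag n l *\<^sub>v w)"
      using ip_adj[OF Uc v, of "rdiag n l *\<^sub>v w"] w mult_mat_vec_carrier[OF rdiag_carrier w] by (simp add: w_def)
    also have "\<dots> = (\<Sum>i<n. cnj (w $ i) * (complex_of_real (l i) * w $ i))"
      using w by (simp add: ip_def rdiag_mv)
    finally have e: "ip n v ((U * rdiag n l * adj U) *\<^sub>v v) = \<dots>" .
    have "0 \<le> Re (ip n v ((U * rdiag n l * adj U) *\<^sub>v v))"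
    proof -
      have t: "cnj (w $ i) * (complex_of_real (l i) * w $ i) = complex_of_real (l i * (cmod (w $ i))\<^sup>2)" for i
        unfolding of_real_mult complex_norm_square by (simp add: mult_ac)
      have "Re (\<Sum>i<n. cnj (w $ i) * (complex_of_real (l i) * w $ i)) = (\<Sum>i<n. l i * (cmod (w $ i))\<^sup>2)"
        unfolding t Re_sum by simp
      also have "\<dots> \<ge> 0" using l by (auto intro!: sum_nonneg)
      finally show ?thesis unfolding e .
    qed
  }
  thus ?thesis using Uc h by (simp add: psd_def ip_def)
qed

lemma adj_mult_index: "A \<in> carrier_mat m n \<Longrightarrow> B \<in> carrier_mat m k \<Longrightarrow> j < n \<Longrightarrow> l < k \<Longrightarrow>
  (adj A * B) $$ (j,l) = (\<Sum>i<m. cnj (A $$ (i,j)) * B $$ (i,l))"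
  by (simp add: scalar_prod_def atLeast0LessThan)

lemma cscalar_self: assumes x: "x \<in> carrier_vec m" shows "x \<bullet>c x = complex_of_real (\<Sum>i<m. (cmod (x $ i))\<^sup>2)"
proof -
  have "x \<bullet>c x = (\<Sum>i<m. x $ i * cnj (x $ i))" using x by (simp add: scalar_prod_def atLeast0LessThan)
  also have "\<dots> = (\<Sum>i<m. complex_of_real ((cmod (x $ i))\<^sup>2))"
    by (rule sum.cong) (auto simp: complex_norm_square[symmetric] simp del: of_real_power)
  finally show ?thesis by (simp only: of_real_sum)
qed

lemma unitary_first_col:
  assumes u: "u \<in> carrier_vec m" and un: "ip m u u = 1" and m: "0 < m"
  shows "\<exists>U. unitary m U \<and> (\<forall>i<m. U $$ (i,0) = u $ i)"
proof -
  interpret cof_vec_space m "TYPE(complex)" .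
  have u0: "u \<noteq> 0\<^sub>v m"
  proof
    assume "u = 0\<^sub>v m"
    hence "ip m u u = 0" by (auto simp: ip_def intro!: sum.neutral)
    with un show False by simp
  qed
  define b where "b = basis_completion u"
  note bc = basis_completion[OF u u0, folded b_def]
  define ws where "ws = gram_schmidt m b"
  from gram_schmidt_result[OF bc(2) bc(4) bc(5) ws_def]
  have ws: "corthogonal ws" "set ws \<subseteq> carrier_vec m" "length ws = m" using bc(6) by auto
  obtain rest where brest: "b = u # rest" using bc(6) bc(7) m by (cases b) auto
  have hd: "hd ws = u" unfolding ws_def brest using u by simp
  hence ws0: "ws ! 0 = u" using ws(3) m by (cases ws) auto
  define c where "c j = (\<Sum>i<m. (cmod ((ws ! j) $ i))\<^sup>2)" for j
  have wsj: "j < m \<Longrightarrow> ws ! j \<in> carrier_vec m" for j using ws by auto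
  have cre: "j < m \<Longrightarrow> ws ! j \<bullet>c ws ! j = complex_of_real (c j)" for j
    using cscalar_self[OF wsj] by (simp add: c_def)
  have cpos: "0 < c j" if j: "j < m" for j
  proof -
    have "ws ! j \<bullet>c ws ! j \<noteq> 0" using corthogonalD[OF ws(1), of j j] j ws(3) by auto
    hence "c j \<noteq> 0" using cre[OF j] by auto
    moreover have "0 \<le> c j" unfolding c_def by (auto intro: sum_nonneg)
    ultimately show ?thesis by simp
  qed
  have c0: "c 0 = 1"
  proof -
    have "ip m u u = u \<bullet>c u" using u by (simp add: ip_def scalar_prod_def atLeast0LessThan mult.commute)
    hence "complex_of_real (c 0) = 1" using cre[OF m] ws0 un by simp
    thus ?thesis by simp
  qed
  define U where "U = mat m m (\<lambda>(i,j). (ws ! j) $ i / complex_of_real (sqrt (c j)))"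
  have Uc: "U \<in> carrier_mat m m" by (simp add: U_def)
  have "adj U * U = 1\<^sub>m m"
  proof (rule eq_matI)
    fix j k assume j: "j < dim_row (1\<^sub>m m)" and k: "k < dim_col (1\<^sub>m m)"
    hence j: "j < m" and k: "k < m" by auto
    have "(adj U * U) $$ (j,k) = (\<Sum>i<m. cnj (U $$ (i,j)) * U $$ (i,k))" by (rule adj_mult_index[OF Uc Uc j k])
    also have "\<dots> = (\<Sum>i<m. cnj ((ws ! j) $ i) * (ws ! k) $ i / (complex_of_real (sqrt (c j)) * complex_of_real (sqrt (c k))))"
      by (rule sum.cong) (auto simp: U_def j k)
    also have "\<dots> = (\<Sum>i<m. cnj ((ws ! j) $ i) * (ws ! k) $ i) / (complex_of_real (sqrt (c j)) * complex_of_real (sqrt (c k)))"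
      by (simp add: sum_divide_distrib)
    finally have "(adj U * U) $$ (j,k) = (\<Sum>i<m. cnj ((ws ! j) $ i) * (ws ! k) $ i) / (complex_of_real (sqrt (c j)) * complex_of_real (sqrt (c k)))" .
    moreover have "(\<Sum>i<m. cnj ((ws ! j) $ i) * (ws ! k) $ i) = ws ! k \<bullet>c ws ! j"
      using wsj[OF j] wsj[OF k] by (simp add: scalar_prod_def atLeast0LessThan mult.commute)
    ultimately have e: "(adj U * U) $$ (j,k) = ws ! k \<bullet>c ws ! j / (complex_of_real (sqrt (c j)) * complex_of_real (sqrt (c k)))" by simp
    show "(adj U * U) $$ (j,k) = 1\<^sub>m m $$ (j,k)"
    proof (cases "j = k")
      case True
      have "sqrt (c k) * sqrt (c k) = c k" using cpos[OF k] by simp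
      hence "complex_of_real (sqrt (c k)) * complex_of_real (sqrt (c k)) = complex_of_real (c k)"
        by (metis of_real_mult)
      thus ?thesis using e True cre[OF k] cpos[OF k] k by simp
    next
      case False
      have "ws ! k \<bullet>c ws ! j = 0" using corthogonalD[OF ws(1), of k j] j k ws(3) False by auto
      thus ?thesis using e False j k by simp
    qed
  qed (use Uc in auto)
  hence "unitary m U" using Uc by (simp add: unitary_def)
  moreover have "\<forall>i<m. U $$ (i,0) = u $ i" using m c0 ws0 by (simp add: U_def)
  ultimately show ?thesis by blast
qed

lemma mm_index: "A \<in> carrier_mat n m \<Longrightarrow> B \<in> carrier_mat m k \<Longrightarrow> i < n \<Longrightarrow> j < k \<Longrightarrow>
  (A * B) $$ (i,j) = (\<Sum>l<m. A $$ (i,l) * B $$ (l,j))"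
  by (simp add: scalar_prod_def atLeast0LessThan)

lemma udu_index: assumes U: "U \<in> carrier_mat n n" and i: "i < n" and j: "j < n"
  shows "(U * rdiag n l * adj U) $$ (i,j) = (\<Sum>k<n. U $$ (i,k) * complex_of_real (l k) * cnj (U $$ (j,k)))"
proof -
  have UD: "U * rdiag n l \<in> carrier_mat n n" using U by simp
  have "(U * rdiag n l * adj U) $$ (i,j) = (\<Sum>k<n. (U * rdiag n l) $$ (i,k) * adj U $$ (k,j))"
    by (rule mm_index[OF UD sq_adj_carrier[OF U] i j])
  also have "\<dots> = (\<Sum>k<n. U $$ (i,k) * complex_of_real (l k) * cnj (U $$ (j,k)))"
    by (rule sum.cong) (use U i j in \<open>auto simp: mult_rdiag_index[OF U] simp del: index_mult_mat(1)\<close>)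
  finally show ?thesis .
qed

lemma unitary_mult: assumes U: "unitary n U" and V: "unitary n V" shows "unitary n (U * V)"
proof -
  note assoc_n = assoc_mult_mat[of _ n n _ n _ n]
  have Uc: "U \<in> carrier_mat n n" and Vc: "V \<in> carrier_mat n n" using U V unitary_carrier by auto
  have "adj (U * V) * (U * V) = adj V * (adj U * U) * V"
    using Uc Vc by (simp add: adj_mult[OF Uc Vc] assoc_n del: assoc_mult_mat)
  also have "\<dots> = 1\<^sub>m n" using unitary_left[OF U] unitary_left[OF V] Vc by simp
  finally show ?thesis using Uc Vc by (simp add: unitary_def)
qed

lemma spectral_herm:
  "A \<in> carrier_mat n n \<Longrightarrow> adj A = A \<Longrightarrow> \<exists>U l. unitary n U \<and> A = U * rdiag n l * adj U"
proof (induction n arbitrary: A)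
  case 0
  have "unitary 0 (1\<^sub>m 0)" by (simp add: unitary_def)
  moreover have "A = 1\<^sub>m 0 * rdiag 0 (\<lambda>_. 0) * adj (1\<^sub>m 0)" using 0 by (auto intro!: eq_matI)
  ultimately show ?case by blast
next
  case (Suc n)
  define m where "m = Suc n"
  note assoc_n = assoc_mult_mat[of _ m m _ m _ m]
  have A: "A \<in> carrier_mat m m" and H: "adj A = A" using Suc.prems by (auto simp: m_def)
  obtain as where cp: "char_poly A = (\<Prod>a\<leftarrow>as. [:- a, 1:])" and len: "length as = m"
    using char_poly_factorized[OF A] by blast
  obtain a rest where as: "as = a # rest" using len by (cases as) (auto simp: m_def)
  have "poly (char_poly A) a = 0" unfolding cp as by simp
  hence "eigenvalue A a" using eigenvalue_root_char_poly[OF A] by simp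
  then obtain v where ev: "eigenvector A v a" unfolding eigenvalue_def by blast
  hence v: "v \<in> carrier_vec m" "v \<noteq> 0\<^sub>v m" "A *\<^sub>v v = a \<cdot>\<^sub>v v" using A by (auto simp: eigenvector_def)
  define nv where "nv = (\<Sum>i<m. (cmod (v $ i))\<^sup>2)"
  have nvpos: "0 < nv"
  proof -
    have "0 \<le> nv" unfolding nv_def by (auto intro: sum_nonneg)
    moreover have "nv \<noteq> 0"
    proof
      assume "nv = 0"
      hence "\<forall>i\<in>{..<m}. (cmod (v $ i))\<^sup>2 = 0" unfolding nv_def by (subst (asm) sum_nonneg_eq_0_iff) auto
      hence "v = 0\<^sub>v m" using v(1) by (auto intro!: eq_vecI)
      with v(2) show False by simp
    qed
    ultimately show ?thesis by simp
  qed
  define u where "u = complex_of_real (1 / sqrt nv) \<cdot>\<^sub>v v"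
  have uc: "u \<in> carrier_vec m" using v by (simp add: u_def)
  have "ip m v v = complex_of_real nv"
  proof -
    have "ip m v v = (\<Sum>i<m. complex_of_real ((cmod (v $ i))\<^sup>2))"
      unfolding ip_def by (rule sum.cong) (auto simp: complex_norm_square mult.commute simp del: of_real_power)
    thus ?thesis by (simp only: nv_def of_real_sum)
  qed
  hence un: "ip m u u = 1"
  proof -
    assume h: "ip m v v = complex_of_real nv"
    have sq: "complex_of_real (sqrt nv) * complex_of_real (sqrt nv) = complex_of_real nv"
      using nvpos by (simp flip: of_real_mult)
    have "ip m u u = (\<Sum>i<m. cnj (v $ i) * v $ i / (complex_of_real (sqrt nv) * complex_of_real (sqrt nv)))"
      using v(1) unfolding ip_def u_def by (intro sum.cong) (auto simp: mult_ac)
    also have "\<dots> = complex_of_real (1 / nv) * ip m v v"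
      unfolding sq ip_def by (simp add: sum_distrib_left sum_divide_distrib)
    also have "\<dots> = 1" using h nvpos by (simp add: field_simps)
    finally show ?thesis .
  qed
  have Au: "A *\<^sub>v u = a \<cdot>\<^sub>v u"
    unfolding u_def using mult_mat_vec[OF A v(1)] v(3) by (simp add: smult_smult_assoc mult.commute)
  obtain W where W: "unitary m W" and W0: "\<forall>i<m. W $$ (i,0) = u $ i"
    using unitary_first_col[OF uc un] by (auto simp: m_def)
  have Wc: "W \<in> carrier_mat m m" using W unitary_carrier by auto
  have WW: "adj W * W = 1\<^sub>m m" "W * adj W = 1\<^sub>m m" using W unitary_left unitary_right by auto
  have m0: "0 < m" by (simp add: m_def)
  have colW: "col W 0 = u" using W0 Wc uc m0 by (auto intro!: eq_vecI)
  define B where "B = adj W * A * W"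
  have Bc: "B \<in> carrier_mat m m" using Wc A by (simp add: B_def)
  have BH: "adj B = B" unfolding B_def
    using Wc A H by (simp add: adj_mult[of _ m m _ m] assoc_n del: assoc_mult_mat)
  have colB: "col B 0 = a \<cdot>\<^sub>v unit_vec m 0"
  proof -
    have "col B 0 = (adj W * A) *\<^sub>v col W 0" unfolding B_def using Wc A m0 by (simp add: col_mult2[of _ m m _ m])
    also have "\<dots> = adj W *\<^sub>v (A *\<^sub>v u)" using Wc A uc colW assoc_mult_mat_vec[of "adj W" m m A m u] by simp
    also have "\<dots> = a \<cdot>\<^sub>v (adj W *\<^sub>v col W 0)" using Au mult_mat_vec[OF sq_adj_carrier[OF Wc] uc] colW by simp
    also have "adj W *\<^sub>v col W 0 = col (adj W * W) 0" using Wc m0 by (simp add: col_mult2[of _ m m _ m])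
    also have "\<dots> = unit_vec m 0" using WW m0 by simp
    finally show ?thesis .
  qed
  have Bcol: "B $$ (i,0) = (if i = 0 then a else 0)" if i: "i < m" for i
  proof -
    have "B $$ (i,0) = col B 0 $ i" using Bc i m0 by simp
    thus ?thesis using colB i by (simp add: unit_vec_def)
  qed
  have areal: "a = complex_of_real (Re a)"
  proof -
    have "B $$ (0,0) = cnj (B $$ (0,0))" using arg_cong[OF BH, of "\<lambda>M. M $$ (0,0)"] Bc m0 by simp
    hence "cnj a = a" using Bcol[OF m0] by simp
    hence "Im (cnj a) = Im a" by simp
    hence "Im a = 0" by simp
    thus ?thesis by (simp add: complex_eq_iff)
  qed
  have Brow: "B $$ (0,j) = (if j = 0 then a else 0)" if j: "j < m" for j
  proof -
    have "B $$ (0,j) = cnj (B $$ (j,0))" using arg_cong[OF BH, of "\<lambda>M. M $$ (0,j)"] Bc m0 j by simp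
    thus ?thesis using Bcol[OF j] areal by (auto simp: complex_eq_iff)
  qed
  define A3 where "A3 = mat n n (\<lambda>(i,j). B $$ (Suc i, Suc j))"
  have A3c: "A3 \<in> carrier_mat n n" by (simp add: A3_def)
  have A3H: "adj A3 = A3"
  proof (rule eq_matI)
    fix i j assume "i < dim_row A3" "j < dim_col A3"
    hence i: "i < n" and j: "j < n" by (auto simp: A3_def)
    have "B $$ (Suc i, Suc j) = cnj (B $$ (Suc j, Suc i))"
      using arg_cong[OF BH, of "\<lambda>M. M $$ (Suc i, Suc j)"] Bc i j by (simp add: m_def)
    thus "adj A3 $$ (i,j) = A3 $$ (i,j)" using i j by (simp add: A3_def)
  qed (auto simp: A3_def)
  obtain U3 l3 where U3: "unitary n U3" and A3eq: "A3 = U3 * rdiag n l3 * adj U3"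
    using Suc.IH[OF A3c A3H] by blast
  have U3c: "U3 \<in> carrier_mat n n" using U3 unitary_carrier by auto
  define U' where "U' = mat m m (\<lambda>(i,j). if i = 0 \<and> j = 0 then 1 else if i = 0 \<or> j = 0 then 0 else U3 $$ (i-1, j-1))"
  define l' where "l' = (\<lambda>i. if i = 0 then Re a else l3 (i - 1))"
  have U'c: "U' \<in> carrier_mat m m" by (simp add: U'_def)
  have U'u: "unitary m U'"
  proof -
    have "adj U' * U' = 1\<^sub>m m"
    proof (rule eq_matI)
      fix j k assume "j < dim_row (1\<^sub>m m)" "k < dim_col (1\<^sub>m m)"
      hence j: "j < m" and k: "k < m" by auto
      have "(adj U' * U') $$ (j,k) = (\<Sum>i<m. cnj (U' $$ (i,j)) * U' $$ (i,k))"
        by (rule adj_mult_index[OF U'c U'c j k])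
      also have "\<dots> = cnj (U' $$ (0,j)) * U' $$ (0,k) + (\<Sum>i<n. cnj (U' $$ (Suc i,j)) * U' $$ (Suc i,k))"
        unfolding m_def by (rule sum.lessThan_Suc_shift)
      also have "\<dots> = 1\<^sub>m m $$ (j,k)"
      proof (cases "j = 0")
        case True
        thus ?thesis using j k by (simp add: U'_def m_def)
      next
        case False
        then obtain j' where j': "j = Suc j'" by (cases j) auto
        show ?thesis
        proof (cases "k = 0")
          case True thus ?thesis using j k j' by (simp add: U'_def m_def)
        next
          case False
          then obtain k' where k': "k = Suc k'" by (cases k) auto
          have "(\<Sum>i<n. cnj (U' $$ (Suc i,j)) * U' $$ (Suc i,k)) = (\<Sum>i<n. cnj (U3 $$ (i,j')) * U3 $$ (i,k'))"
            by (rule sum.cong) (use j k j' k' in \<open>auto simp: U'_def m_def\<close>)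
          also have "\<dots> = (adj U3 * U3) $$ (j',k')"
            using j k j' k' by (simp add: adj_mult_index[OF U3c U3c] m_def)
          also have "\<dots> = 1\<^sub>m n $$ (j',k')" using unitary_left[OF U3] by simp
          finally show ?thesis using j k j' k' by (simp add: U'_def m_def)
        qed
      qed
      finally show "(adj U' * U') $$ (j,k) = 1\<^sub>m m $$ (j,k)" .
    qed (use U'c in auto)
    thus ?thesis using U'c by (simp add: unitary_def)
  qed
  have Beq: "B = U' * rdiag m l' * adj U'"
  proof (rule eq_matI)
    fix i j assume "i < dim_row (U' * rdiag m l' * adj U')" "j < dim_col (U' * rdiag m l' * adj U')"
    hence i: "i < m" and j: "j < m" using U'c by auto
    have "(U' * rdiag m l' * adj U') $$ (i,j) = (\<Sum>k<m. U' $$ (i,k) * complex_of_real (l' k) * cnj (U' $$ (j,k)))"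
      by (rule udu_index[OF U'c i j])
    also have "\<dots> = U' $$ (i,0) * complex_of_real (l' 0) * cnj (U' $$ (j,0)) +
        (\<Sum>k<n. U' $$ (i,Suc k) * complex_of_real (l' (Suc k)) * cnj (U' $$ (j,Suc k)))"
      unfolding m_def by (rule sum.lessThan_Suc_shift)
    also have "\<dots> = B $$ (i,j)"
    proof (cases "i = 0")
      case True
      thus ?thesis using i j Brow[OF j] areal by (cases "j = 0") (simp_all add: U'_def m_def l'_def)
    next
      case False
      then obtain i' where i': "i = Suc i'" by (cases i) auto
      show ?thesis
      proof (cases "j = 0")
        case True thus ?thesis using i j i' Bcol[OF i] by (simp add: U'_def m_def l'_def)
      next
        case False
        then obtain j' where j': "j = Suc j'" by (cases j) auto
        have "(\<Sum>k<n. U' $$ (i,Suc k) * complex_of_real (l' (Suc k)) * cnj (U' $$ (j,Suc k)))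
            = (\<Sum>k<n. U3 $$ (i',k) * complex_of_real (l3 k) * cnj (U3 $$ (j',k)))"
          by (rule sum.cong) (use i j i' j' in \<open>auto simp: U'_def m_def l'_def\<close>)
        also have "\<dots> = A3 $$ (i',j')"
          using udu_index[OF U3c, of i' j' l3] i j i' j' by (simp add: A3eq m_def)
        also have "\<dots> = B $$ (i,j)" using i j i' j' by (simp add: A3_def m_def)
        finally show ?thesis using i j i' j' by (simp add: U'_def m_def)
      qed
    qed
    finally show "B $$ (i,j) = (U' * rdiag m l' * adj U') $$ (i,j)" by simp
  qed (use U'c Bc in auto)
  have "A = W * B * adj W"
  proof -
    have "W * B * adj W = (W * adj W) * A * (W * adj W)"
      unfolding B_def using Wc A by (simp add: assoc_n del: assoc_mult_mat)
    thus ?thesis using WW A by simp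
  qed
  also have "\<dots> = (W * U') * rdiag m l' * adj (W * U')"
    unfolding Beq using Wc U'c by (simp add: adj_mult[OF Wc U'c] assoc_n del: assoc_mult_mat)
  finally have "A = (W * U') * rdiag m l' * adj (W * U')" .
  moreover have "unitary m (W * U')" by (rule unitary_mult[OF W U'u])
  ultimately show ?case unfolding m_def by blast
qed

lemma rdiag_cong: "(\<And>i. i < n \<Longrightarrow> f i = g i) \<Longrightarrow> rdiag n f = rdiag n g"
  by (rule eq_matI) auto

lemma udu_mult: assumes U: "unitary n U"
  shows "(U * rdiag n f * adj U) * (U * rdiag n g * adj U) = U * rdiag n (\<lambda>i. f i * g i) * adj U"
proof -
  note assoc_n = assoc_mult_mat[of _ n n _ n _ n]
  have Uc: "U \<in> carrier_mat n n" using U unitary_carrier by auto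
  have "(U * rdiag n f * adj U) * (U * rdiag n g * adj U) = U * rdiag n f * (adj U * U) * rdiag n g * adj U"
    using Uc by (simp add: assoc_n del: assoc_mult_mat)
  also have "\<dots> = U * (rdiag n f * rdiag n g) * adj U" using Uc unitary_left[OF U] by (simp add: assoc_n del: assoc_mult_mat)
  finally show ?thesis by (simp add: rdiag_rdiag)
qed

lemma psd_eig_nonneg:
  assumes A: "psd n A" and U: "unitary n U" and eq: "A = U * rdiag n l * adj U" and i: "i < n"
  shows "0 \<le> l i"
proof -
  note assoc_n = assoc_mult_mat[of _ n n _ n _ n]
  have Uc: "U \<in> carrier_mat n n" using U unitary_carrier by auto
  have Ac: "A \<in> carrier_mat n n" using A psd_carrier by auto
  define w where "w = col U i"
  have w: "w \<in> carrier_vec n" using Uc i by (simp add: w_def)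
  have AU: "A * U = U * rdiag n l"
    using Uc unitary_left[OF U] by (simp add: eq assoc_n del: assoc_mult_mat)
  have "A *\<^sub>v w = col (A * U) i" unfolding w_def by (rule col_mult2[OF Ac Uc i, symmetric])
  also have "\<dots> = complex_of_real (l i) \<cdot>\<^sub>v w"
    unfolding AU using Uc i by (auto intro!: eq_vecI simp: w_def mult_rdiag_index[OF Uc] mult.commute simp del: index_mult_mat(1))
  finally have Aw: "A *\<^sub>v w = complex_of_real (l i) \<cdot>\<^sub>v w" .
  have "ip n w w = (adj U * U) $$ (i,i)"
    using Uc i by (simp add: adj_mult_index[OF Uc Uc i i] ip_def w_def)
  hence ww: "ip n w w = 1" using unitary_left[OF U] i by simp
  have "ip n w (A *\<^sub>v w) = complex_of_real (l i) * ip n w w"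
    using w unfolding Aw ip_def by (simp add: sum_distrib_left mult_ac)
  hence "ip n w (A *\<^sub>v w) = complex_of_real (l i)" using ww by simp
  with psd_qf[OF A w] show ?thesis by simp
qed

lemma spectral_psd: assumes A: "psd n A"
  shows "\<exists>U l. unitary n U \<and> A = U * rdiag n l * adj U \<and> (\<forall>i<n. 0 \<le> l i)"
proof -
  obtain U l where U: "unitary n U" and eq: "A = U * rdiag n l * adj U"
    using spectral_herm[OF psd_carrier[OF A] psd_herm[OF A]] by blast
  thus ?thesis using psd_eig_nonneg[OF A U eq] by blast
qed

lemma psd_sqrt_eq: assumes B: "psd n B" and C: "psd n C" and eq: "B * B = C * C"
  shows "B = C"
proof -
  obtain U b where U: "unitary n U" and Beq: "B = U * rdiag n b * adj U" and b: "\<forall>i<n. 0 \<le> b i"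
    using spectral_psd[OF B] by blast
  obtain V c where V: "unitary n V" and Ceq: "C = V * rdiag n c * adj V" and c: "\<forall>i<n. 0 \<le> c i"
    using spectral_psd[OF C] by blast
  have "U * rdiag n (\<lambda>i. b i * b i) * adj U = V * rdiag n (\<lambda>i. c i * c i) * adj V"
    using eq unfolding Beq Ceq udu_mult[OF U] udu_mult[OF V] .
  from fc_unique[OF U V this, of sqrt]
  have "U * rdiag n (\<lambda>i. sqrt (b i * b i)) * adj U = V * rdiag n (\<lambda>i. sqrt (c i * c i)) * adj V" .
  moreover have "rdiag n (\<lambda>i. sqrt (b i * b i)) = rdiag n b" using b by (intro rdiag_cong) simp
  moreover have "rdiag n (\<lambda>i. sqrt (c i * c i)) = rdiag n c" using c by (intro rdiag_cong) simp
  ultimately show ?thesis using Beq Ceq by simp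
qed

lemma psd_sqrt_unique: assumes A: "A \<in> carrier_mat n n" and B: "psd n B" and BA: "B * B = A"
  shows "psd_sqrt A = B"
  unfolding psd_sqrt_def
proof (rule the_equality)
  show "psd (dim_row A) B \<and> B * B = A" using A B BA by simp
next
  fix C assume "psd (dim_row A) C \<and> C * C = A"
  hence C: "psd n C" and CA: "C * C = A" using A by auto
  show "C = B" by (rule psd_sqrt_eq[OF C B]) (simp add: CA BA)
qed

lemma psd_sqrt_exists: assumes A: "psd n A"
  shows "psd n (psd_sqrt A) \<and> psd_sqrt A * psd_sqrt A = A"
proof -
  obtain U l where U: "unitary n U" and eq: "A = U * rdiag n l * adj U" and l: "\<forall>i<n. 0 \<le> l i"
    using spectral_psd[OF A] by blast
  define B where "B = U * rdiag n (\<lambda>i. sqrt (l i)) * adj U"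
  have B: "psd n B" unfolding B_def by (rule psd_diag[OF U]) (use l in auto)
  have "B * B = U * rdiag n (\<lambda>i. sqrt (l i) * sqrt (l i)) * adj U" unfolding B_def by (rule udu_mult[OF U])
  also have "rdiag n (\<lambda>i. sqrt (l i) * sqrt (l i)) = rdiag n l" using l by (intro rdiag_cong) simp
  finally have BA: "B * B = A" using eq by simp
  have "psd_sqrt A = B" by (rule psd_sqrt_unique[OF psd_carrier[OF A] B BA])
  thus ?thesis using B BA by simp
qed

lemma mat_powr_eq: assumes U: "unitary n U" and eq: "A = U * rdiag n l * adj U"
  shows "mat_powr A s = U * rdiag n (\<lambda>i. l i powr s) * adj U"
proof -
  have Uc: "U \<in> carrier_mat n n" using U unitary_carrier by auto
  have dA: "dim_row A = n" using Uc eq by simp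
  show ?thesis unfolding mat_powr_def dA
  proof (rule the_equality)
    show "\<exists>U' l'. unitary n U' \<and> A = U' * rdiag n l' * adj U' \<and>
        U * rdiag n (\<lambda>i. l i powr s) * adj U = U' * rdiag n (\<lambda>i. l' i powr s) * adj U'"
      using U eq by blast
  next
    fix B assume "\<exists>U' l'. unitary n U' \<and> A = U' * rdiag n l' * adj U' \<and> B = U' * rdiag n (\<lambda>i. l' i powr s) * adj U'"
    then obtain U' l' where U': "unitary n U'" and eq': "A = U' * rdiag n l' * adj U'"
      and B: "B = U' * rdiag n (\<lambda>i. l' i powr s) * adj U'" by blast
    show "B = U * rdiag n (\<lambda>i. l i powr s) * adj U"
      unfolding B by (rule fc_unique[OF U' U]) (use eq eq' in simp)
  qed
qed

lemma adj_self_zero: assumes A: "A \<in> carrier_mat n m" and z: "adj A * A = 0\<^sub>m m m"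
  shows "A = 0\<^sub>m n m"
proof (rule eq_matI)
  fix i j assume "i < dim_row (0\<^sub>m n m)" "j < dim_col (0\<^sub>m n m)"
  hence i: "i < n" and j: "j < m" by auto
  have "(adj A * A) $$ (j,j) = (\<Sum>k<n. cnj (A $$ (k,j)) * A $$ (k,j))"
    by (rule adj_mult_index[OF A A j j])
  also have "\<dots> = complex_of_real (\<Sum>k<n. (cmod (A $$ (k,j)))\<^sup>2)"
    unfolding of_real_sum by (rule sum.cong) (auto simp: complex_norm_square mult.commute simp del: of_real_power)
  finally have e: "(adj A * A) $$ (j,j) = complex_of_real (\<Sum>k<n. (cmod (A $$ (k,j)))\<^sup>2)" .
  have "(adj A * A) $$ (j,j) = 0" using z j by simp
  hence "complex_of_real (\<Sum>k<n. (cmod (A $$ (k,j)))\<^sup>2) = 0" using e by simp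
  hence "(\<Sum>k<n. (cmod (A $$ (k,j)))\<^sup>2) = 0" by (simp only: of_real_eq_0_iff)
  hence "\<forall>k\<in>{..<n}. (cmod (A $$ (k,j)))\<^sup>2 = 0" by (subst (asm) sum_nonneg_eq_0_iff) auto
  thus "A $$ (i,j) = 0\<^sub>m n m $$ (i,j)" using i j by simp
qed (use A in auto)

lemma psd_add: assumes A: "psd n A" and B: "psd n B" shows "psd n (A + B)"
proof -
  have Ac: "A \<in> carrier_mat n n" and Bc: "B \<in> carrier_mat n n" using A B psd_carrier by auto
  have H: "adj (A + B) = A + B" using psd_herm[OF A] psd_herm[OF B] by (simp add: adj_add[OF Ac Bc])
  { fix v :: "complex vec" assume v: "v \<in> carrier_vec n"
    have "ip n v ((A + B) *\<^sub>v v) = ip n v (A *\<^sub>v v) + ip n v (B *\<^sub>v v)"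
      using Ac Bc v by (simp add: add_mult_distrib_mat_vec[OF Ac Bc v] ip_def sum.distrib algebra_simps)
    hence "0 \<le> Re (ip n v ((A + B) *\<^sub>v v))" using psd_qf[OF A v] psd_qf[OF B v] by simp }
  thus ?thesis using Ac Bc H by (simp add: psd_def ip_def)
qed

lemma psd_smult: assumes A: "psd n A" and c: "0 \<le> c" shows "psd n (complex_of_real c \<cdot>\<^sub>m A)"
proof -
  have Ac: "A \<in> carrier_mat n n" using A psd_carrier by auto
  have H: "adj (complex_of_real c \<cdot>\<^sub>m A) = complex_of_real c \<cdot>\<^sub>m A" using psd_herm[OF A] by (simp add: adj_smult)
  { fix v :: "complex vec" assume v: "v \<in> carrier_vec n"
    have "ip n v ((complex_of_real c \<cdot>\<^sub>m A) *\<^sub>v v) = complex_of_real c * ip n v (A *\<^sub>v v)"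
      using Ac v by (simp add: ip_def sum_distrib_left algebra_simps scalar_prod_def)
    hence "0 \<le> Re (ip n v ((complex_of_real c \<cdot>\<^sub>m A) *\<^sub>v v))" using psd_qf[OF A v] c by simp }
  thus ?thesis using Ac H by (simp add: psd_def ip_def)
qed

lemma psd_zero: "psd n (0\<^sub>m n n)"
  by (simp add: psd_def ip_def)

lemma smult_smult_mat: "k \<cdot>\<^sub>m (l \<cdot>\<^sub>m A) = (k * l) \<cdot>\<^sub>m (A :: complex mat)"
  by (rule eq_matI) auto

lemma sqrt_kill:
  assumes R: "psd d \<rho>" and T: "psd d \<tau>" and TR: "\<tau> * \<rho> = 0\<^sub>m d d"
  shows "psd_sqrt \<rho> * \<tau> = 0\<^sub>m d d"
proof -
  note assoc_n = assoc_mult_mat[of _ d d _ d _ d]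
  obtain S where S: "psd d S" "S * S = \<rho>" and Sdef: "psd_sqrt \<rho> = S"
    using psd_sqrt_exists[OF R] by blast
  have Sc: "S \<in> carrier_mat d d" using S psd_carrier by auto
  have Tc: "\<tau> \<in> carrier_mat d d" using T psd_carrier by auto
  define X where "X = S * \<tau>"
  have Xc: "X \<in> carrier_mat d d" using Sc Tc by (simp add: X_def)
  have "adj X = \<tau> * S" unfolding X_def using adj_mult[OF Sc Tc] psd_herm[OF S(1)] psd_herm[OF T] by simp
  hence "adj X * X = \<tau> * (S * S) * \<tau>" using Sc Tc by (simp add: X_def assoc_n del: assoc_mult_mat)
  also have "\<dots> = 0\<^sub>m d d" using S(2) TR Tc by simp
  finally have "X = 0\<^sub>m d d" using adj_self_zero[OF Xc] by simp
  thus ?thesis using Sdef X_def by simp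
qed

lemma fid1_lemma:
  assumes R: "density d \<rho>" and T: "density d \<tau>" and RT: "\<rho> * \<tau> = 0\<^sub>m d d" and TR: "\<tau> * \<rho> = 0\<^sub>m d d"
    and e0: "0 \<le> eps" and e1: "eps \<le> 1"
  shows "fid1 \<rho> (complex_of_real eps \<cdot>\<^sub>m \<tau> + complex_of_real (1 - eps) \<cdot>\<^sub>m \<rho>) = 1 - eps"
proof -
  note assoc_n = assoc_mult_mat[of _ d d _ d _ d]
  have Rp: "psd d \<rho>" and Tp: "psd d \<tau>" and trR: "tr \<rho> = 1" using R T by (auto simp: density_def)
  have Rc: "\<rho> \<in> carrier_mat d d" and Tc: "\<tau> \<in> carrier_mat d d" using Rp Tp psd_carrier by auto
  obtain S where S: "psd d S" "S * S = \<rho>" and Sdef: "psd_sqrt \<rho> = S"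
    using psd_sqrt_exists[OF Rp] by blast
  have Sc: "S \<in> carrier_mat d d" using S psd_carrier by auto
  have ST: "S * \<tau> = 0\<^sub>m d d" using sqrt_kill[OF Rp Tp TR] Sdef by simp
  define c where "c = complex_of_real (1 - eps)"
  have "S * (complex_of_real eps \<cdot>\<^sub>m \<tau> + c \<cdot>\<^sub>m \<rho>) = complex_of_real eps \<cdot>\<^sub>m (S * \<tau>) + c \<cdot>\<^sub>m (S * \<rho>)"
    using Sc Tc Rc by (simp add: mult_add_distrib_mat[of _ d d _ d] mult_smult_distrib[of _ d d _ d])
  also have "\<dots> = c \<cdot>\<^sub>m (S * \<rho>)" using ST Sc Rc by simp
  finally have "S * (complex_of_real eps \<cdot>\<^sub>m \<tau> + c \<cdot>\<^sub>m \<rho>) * S = c \<cdot>\<^sub>m (S * \<rho>) * S" by simp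
  also have "\<dots> = c \<cdot>\<^sub>m (S * \<rho> * S)"
    using Sc Rc by (simp add: mult_smult_assoc_mat[of _ d d _ d])
  also have "S * \<rho> * S = (S * S) * (S * S)"
    unfolding S(2)[symmetric] using Sc by (simp add: assoc_n del: assoc_mult_mat)
  also have "\<dots> = \<rho> * \<rho>" by (simp add: S(2))
  finally have M: "psd_sqrt \<rho> * (complex_of_real eps \<cdot>\<^sub>m \<tau> + c \<cdot>\<^sub>m \<rho>) * psd_sqrt \<rho> = c \<cdot>\<^sub>m (\<rho> * \<rho>)"
    using Sdef by simp
  define B where "B = complex_of_real (sqrt (1 - eps)) \<cdot>\<^sub>m \<rho>"
  have Bp: "psd d B" unfolding B_def by (rule psd_smult[OF Rp]) (use e1 in simp)
  have "B * B = (complex_of_real (sqrt (1 - eps)) * complex_of_real (sqrt (1 - eps))) \<cdot>\<^sub>m (\<rho> * \<rho>)"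
    unfolding B_def using Rc by (simp add: mult_smult_assoc_mat[of _ d d _ d] mult_smult_distrib[of _ d d _ d] smult_smult_mat)
  also have "complex_of_real (sqrt (1 - eps)) * complex_of_real (sqrt (1 - eps)) = c"
    unfolding c_def using e1 by (simp flip: of_real_mult)
  finally have BB: "B * B = c \<cdot>\<^sub>m (\<rho> * \<rho>)" .
  have "psd_sqrt (c \<cdot>\<^sub>m (\<rho> * \<rho>)) = B" by (rule psd_sqrt_unique[OF _ Bp BB]) (use Rc in simp)
  hence "psd_sqrt (psd_sqrt \<rho> * (complex_of_real eps \<cdot>\<^sub>m \<tau> + c \<cdot>\<^sub>m \<rho>) * psd_sqrt \<rho>) = B" using M by simp
  moreover have "tr B = complex_of_real (sqrt (1 - eps))" unfolding B_def using tr_smult[OF Rc] trR by simp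
  ultimately show ?thesis unfolding fid1_def c_def using e1 by simp
qed

lemma fidA_lemma:
  assumes R: "density d \<rho>" and T: "density d \<tau>" and RT: "\<rho> * \<tau> = 0\<^sub>m d d" and TR: "\<tau> * \<rho> = 0\<^sub>m d d"
    and e0: "0 \<le> eps" and e1: "eps \<le> 1"
  shows "fidA \<rho> (complex_of_real eps \<cdot>\<^sub>m \<tau> + complex_of_real (1 - eps) \<cdot>\<^sub>m \<rho>) = 1 - eps"
proof -
  note assoc_n = assoc_mult_mat[of _ d d _ d _ d]
  have Rp: "psd d \<rho>" and Tp: "psd d \<tau>" and trR: "tr \<rho> = 1" using R T by (auto simp: density_def)
  have Rc: "\<rho> \<in> carrier_mat d d" and Tc: "\<tau> \<in> carrier_mat d d" using Rp Tp psd_carrier by auto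
  obtain S where S: "psd d S" "S * S = \<rho>" and Sdef: "psd_sqrt \<rho> = S"
    using psd_sqrt_exists[OF Rp] by blast
  obtain T where T: "psd d T" "T * T = \<tau>" and Tdef: "psd_sqrt \<tau> = T"
    using psd_sqrt_exists[OF Tp] by blast
  have Sc: "S \<in> carrier_mat d d" using S psd_carrier by auto
  have Tc': "T \<in> carrier_mat d d" using T psd_carrier by auto
  have Stau: "S * \<tau> = 0\<^sub>m d d" using sqrt_kill[OF Rp Tp TR] Sdef by simp
  define Y where "Y = S * T"
  have Yc: "Y \<in> carrier_mat d d" using Sc Tc' by (simp add: Y_def)
  have adjY: "adj Y = T * S" unfolding Y_def using adj_mult[OF Sc Tc'] psd_herm[OF S(1)] psd_herm[OF T(1)] by simp
  have "Y * adj Y = S * (T * T) * S"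
    unfolding adjY unfolding Y_def using Sc Tc' by (simp add: assoc_n del: assoc_mult_mat)
  also have "\<dots> = 0\<^sub>m d d" using Stau Sc T(2) by simp
  finally have "adj (adj Y) * adj Y = 0\<^sub>m d d" by simp
  hence "adj Y = 0\<^sub>m d d" using adj_self_zero[OF sq_adj_carrier[OF Yc]] by blast
  hence ST: "S * T = 0\<^sub>m d d" and TS: "T * S = 0\<^sub>m d d" using adjY
    by (metis Y_def adj_adj adj_zero) (use adjY \<open>adj Y = 0\<^sub>m d d\<close> in simp)
  define a where "a = complex_of_real (sqrt eps)"
  define b where "b = complex_of_real (sqrt (1 - eps))"
  define Rt where "Rt = a \<cdot>\<^sub>m T + b \<cdot>\<^sub>m S"
  have Rtp: "psd d Rt" unfolding Rt_def a_def b_def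
    by (intro psd_add psd_smult T(1) S(1)) (use e0 e1 in auto)
  have aa: "a * a = complex_of_real eps" unfolding a_def using e0 by (simp flip: of_real_mult)
  have bb: "b * b = complex_of_real (1 - eps)" unfolding b_def using e1 by (simp flip: of_real_mult)
  have "Rt * Rt = (a \<cdot>\<^sub>m T) * (a \<cdot>\<^sub>m T + b \<cdot>\<^sub>m S) + (b \<cdot>\<^sub>m S) * (a \<cdot>\<^sub>m T + b \<cdot>\<^sub>m S)"
    unfolding Rt_def using Sc Tc' by (simp add: add_mult_distrib_mat[of _ d d _ _ d])
  also have "\<dots> = (a * a) \<cdot>\<^sub>m (T * T) + (b * a) \<cdot>\<^sub>m (T * S) + ((a * b) \<cdot>\<^sub>m (S * T) + (b * b) \<cdot>\<^sub>m (S * S))"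
    using Sc Tc' by (simp add: mult_add_distrib_mat[of _ d d _ d] mult_smult_assoc_mat[of _ d d _ d]
        mult_smult_distrib[of _ d d _ d] smult_smult_mat)
  also have "\<dots> = complex_of_real eps \<cdot>\<^sub>m \<tau> + complex_of_real (1 - eps) \<cdot>\<^sub>m \<rho>"
    using ST TS aa bb T(2) S(2) Tc Rc by simp
  finally have RR: "Rt * Rt = complex_of_real eps \<cdot>\<^sub>m \<tau> + complex_of_real (1 - eps) \<cdot>\<^sub>m \<rho>" .
  have "psd_sqrt (complex_of_real eps \<cdot>\<^sub>m \<tau> + complex_of_real (1 - eps) \<cdot>\<^sub>m \<rho>) = Rt"
    by (rule psd_sqrt_unique[OF _ Rtp RR]) (use Rc Tc in simp)
  moreover have "S * Rt = b \<cdot>\<^sub>m \<rho>"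
    unfolding Rt_def using Sc Tc' ST S(2) Rc by (simp add: mult_add_distrib_mat[of _ d d _ d] mult_smult_distrib[of _ d d _ d])
  moreover have "tr (b \<cdot>\<^sub>m \<rho>) = b" using tr_smult[OF Rc] trR by simp
  ultimately show ?thesis unfolding fidA_def using Sdef e1 by (simp add: b_def)
qed

lemma fidQ_lemma:
  assumes R: "density d \<rho>" and T: "density d \<tau>" and RT: "\<rho> * \<tau> = 0\<^sub>m d d" and TR: "\<tau> * \<rho> = 0\<^sub>m d d"
    and e0: "0 \<le> eps" and e1: "eps \<le> 1"
  shows "fidQ \<rho> (complex_of_real eps \<cdot>\<^sub>m \<tau> + complex_of_real (1 - eps) \<cdot>\<^sub>m \<rho>) = 1 - eps"
proof -
  note assoc_n = assoc_mult_mat[of _ d d _ d _ d]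
  define \<sigma> where "\<sigma> = complex_of_real eps \<cdot>\<^sub>m \<tau> + complex_of_real (1 - eps) \<cdot>\<^sub>m \<rho>"
  have Rp: "psd d \<rho>" and Tp: "psd d \<tau>" and trR: "tr \<rho> = 1" using R T by (auto simp: density_def)
  have Rc: "\<rho> \<in> carrier_mat d d" and Tc: "\<tau> \<in> carrier_mat d d" using Rp Tp psd_carrier by auto
  have Sp: "psd d \<sigma>" unfolding \<sigma>_def by (intro psd_add psd_smult Tp Rp) (use e0 e1 in auto)
  have Sc: "\<sigma> \<in> carrier_mat d d" using Sp psd_carrier by auto
  obtain U l where U: "unitary d U" and Req: "\<rho> = U * rdiag d l * adj U" and l: "\<forall>i<d. 0 \<le> l i"
    using spectral_psd[OF Rp] by blast
  obtain V m where V: "unitary d V" and Seq: "\<sigma> = V * rdiag d m * adj V"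
    using spectral_psd[OF Sp] by blast
  have Uc: "U \<in> carrier_mat d d" using U unitary_carrier by auto
  have RU: "\<rho> * U = U * rdiag d l"
    using Uc unitary_left[OF U] by (simp add: Req assoc_n del: assoc_mult_mat)
  define W where "W = U * rdiag d l"
  have Wc: "W \<in> carrier_mat d d" using Uc by (simp add: W_def)
  have SW: "\<sigma> * W = W * rdiag d (\<lambda>i. (1 - eps) * l i)"
  proof -
    have "\<sigma> * W = \<sigma> * \<rho> * U" using Sc Rc Uc by (simp add: W_def RU[symmetric] assoc_n del: assoc_mult_mat)
    also have "\<sigma> * \<rho> = complex_of_real (1 - eps) \<cdot>\<^sub>m (\<rho> * \<rho>)"
      unfolding \<sigma>_def using Rc Tc TR by (simp add: add_mult_distrib_mat[of _ d d _ _ d] mult_smult_assoc_mat[of _ d d _ d])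
    also have "complex_of_real (1 - eps) \<cdot>\<^sub>m (\<rho> * \<rho>) * U = complex_of_real (1 - eps) \<cdot>\<^sub>m (\<rho> * (\<rho> * U))"
      using Rc Uc by (simp add: mult_smult_assoc_mat[of _ d d _ d] assoc_n del: assoc_mult_mat)
    also have "\<rho> * (\<rho> * U) = W * rdiag d l"
      unfolding RU W_def using Rc Uc by (simp add: RU[symmetric] assoc_n del: assoc_mult_mat)
    also have "complex_of_real (1 - eps) \<cdot>\<^sub>m (W * rdiag d l) = W * rdiag d (\<lambda>i. (1 - eps) * l i)"
      using Wc by (intro eq_matI) (auto simp: mult_rdiag_index[OF Wc] simp del: index_mult_mat(1))
    finally show ?thesis .
  qed
  have QW: "V * rdiag d (\<lambda>i. m i powr (1 - s)) * adj V * W = W * rdiag d (\<lambda>i. ((1 - eps) * l i) powr (1 - s))" for s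
    by (rule fc_eigen[OF V Seq Wc SW])
  have Ps: "mat_powr \<rho> s = W * rdiag d (\<lambda>i. l i powr (s - 1)) * adj U" for s
  proof -
    have "mat_powr \<rho> s = U * rdiag d (\<lambda>i. l i powr s) * adj U" by (rule mat_powr_eq[OF U Req])
    also have "rdiag d (\<lambda>i. l i powr s) = rdiag d l * rdiag d (\<lambda>i. l i powr (s - 1))"
      unfolding rdiag_rdiag
    proof (rule rdiag_cong)
      fix i assume i: "i < d"
      show "l i powr s = l i * l i powr (s - 1)"
        using l i by (cases "l i = 0") (auto simp: powr_mult_base)
    qed
    finally show ?thesis using Uc by (simp add: W_def assoc_n del: assoc_mult_mat)
  qed
  have Qs: "mat_powr \<sigma> t = V * rdiag d (\<lambda>i. m i powr t) * adj V" for t by (rule mat_powr_eq[OF V Seq])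
  have key: "Re (tr (mat_powr \<rho> s * mat_powr \<sigma> (1 - s))) = (1 - eps) powr (1 - s)" for s
  proof -
    have Pc: "mat_powr \<rho> s \<in> carrier_mat d d" using Ps Wc Uc by simp
    have Qc: "mat_powr \<sigma> (1 - s) \<in> carrier_mat d d" using Qs V unitary_carrier by simp
    have "mat_powr \<sigma> (1 - s) * mat_powr \<rho> s = (V * rdiag d (\<lambda>i. m i powr (1 - s)) * adj V * W) * rdiag d (\<lambda>i. l i powr (s - 1)) * adj U"
      unfolding Qs Ps using V unitary_carrier[OF V] Wc Uc by (simp add: assoc_n del: assoc_mult_mat)
    also have "\<dots> = U * (rdiag d l * rdiag d (\<lambda>i. ((1 - eps) * l i) powr (1 - s)) * rdiag d (\<lambda>i. l i powr (s - 1))) * adj U"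
      unfolding QW unfolding W_def using Uc by (simp add: assoc_n del: assoc_mult_mat)
    also have "rdiag d l * rdiag d (\<lambda>i. ((1 - eps) * l i) powr (1 - s)) * rdiag d (\<lambda>i. l i powr (s - 1))
        = rdiag d (\<lambda>i. (1 - eps) powr (1 - s) * l i)"
      unfolding rdiag_rdiag
    proof (rule rdiag_cong)
      fix i assume i: "i < d"
      show "l i * ((1 - eps) * l i) powr (1 - s) * l i powr (s - 1) = (1 - eps) powr (1 - s) * l i"
      proof (cases "l i = 0")
        case True thus ?thesis by simp
      next
        case False
        hence lp: "0 < l i" using l i by (simp add: less_le)
        have "((1 - eps) * l i) powr (1 - s) = (1 - eps) powr (1 - s) * l i powr (1 - s)"
          using e1 lp by (simp add: powr_mult)
        moreover have "l i powr (1 - s) * l i powr (s - 1) = 1"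
          using lp by (simp flip: powr_add)
        ultimately show ?thesis by (simp add: mult_ac)
      qed
    qed
    also have "U * rdiag d (\<lambda>i. (1 - eps) powr (1 - s) * l i) * adj U = complex_of_real ((1 - eps) powr (1 - s)) \<cdot>\<^sub>m \<rho>"
    proof -
      have "rdiag d (\<lambda>i. (1 - eps) powr (1 - s) * l i) = complex_of_real ((1 - eps) powr (1 - s)) \<cdot>\<^sub>m rdiag d l"
        by (rule eq_matI) auto
      thus ?thesis unfolding Req using Uc
        by (simp add: mult_smult_assoc_mat[of _ d d _ d] mult_smult_distrib[of _ d d _ d])
    qed
    finally have e: "mat_powr \<sigma> (1 - s) * mat_powr \<rho> s = complex_of_real ((1 - eps) powr (1 - s)) \<cdot>\<^sub>m \<rho>" .
    have "tr (mat_powr \<rho> s * mat_powr \<sigma> (1 - s)) = tr (mat_powr \<sigma> (1 - s) * mat_powr \<rho> s)"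
      by (rule tr_mult_comm[OF Pc Qc])
    also have "\<dots> = complex_of_real ((1 - eps) powr (1 - s))" unfolding e using tr_smult[OF Rc] trR by simp
    finally show ?thesis by simp
  qed
  have "fidQ \<rho> \<sigma> = Inf ((\<lambda>s. (1 - eps) powr (1 - s)) ` {0..1})"
    unfolding fidQ_def using key by simp
  also have "\<dots> = 1 - eps"
  proof (rule cInf_eq_minimum)
    show "1 - eps \<in> (\<lambda>s. (1 - eps) powr (1 - s)) ` {0..1}"
      using e1 by (intro image_eqI[of _ _ 0]) (auto simp: powr_one)
  next
    fix x assume "x \<in> (\<lambda>s. (1 - eps) powr (1 - s)) ` {0..1}"
    then obtain s where s: "s \<in> {0..1}" and x: "x = (1 - eps) powr (1 - s)" by auto
    have "(1 - eps) powr 1 \<le> (1 - eps) powr (1 - s)" using s e0 e1 by (intro powr_mono') auto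
    thus "1 - eps \<le> x" using x e1 by (simp add: powr_one)
  qed
  finally show ?thesis unfolding \<sigma>_def .
qed

lemma wsum_carrier[simp]: "wsum d p A J \<in> carrier_mat d d"
  by (simp add: wsum_def)

lemma wsum_empty: "wsum d p A {} = 0\<^sub>m d d"
  by (rule eq_matI) (auto simp: wsum_def)

lemma wsum_insert: assumes "finite J" "j \<notin> J" "A j \<in> carrier_mat d d"
  shows "wsum d p A (insert j J) = complex_of_real (p j) \<cdot>\<^sub>m A j + wsum d p A J"
  by (rule eq_matI) (use assms in \<open>auto simp: wsum_def\<close>)

lemma wsum_props:
  assumes "finite J" and "\<forall>j\<in>J. psd d (A j) \<and> 0 \<le> p j \<and> A j * M = 0\<^sub>m d d \<and> M * A j = 0\<^sub>m d d"
    and M: "M \<in> carrier_mat d d"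
  shows "psd d (wsum d p A J) \<and> wsum d p A J * M = 0\<^sub>m d d \<and> M * wsum d p A J = 0\<^sub>m d d \<and>
     tr (wsum d p A J) = (\<Sum>j\<in>J. complex_of_real (p j) * tr (A j))"
  using assms(1,2)
proof (induction J rule: finite_induct)
  case empty
  thus ?case using M by (simp add: wsum_empty psd_zero tr_def)
next
  case (insert j J)
  have Aj: "psd d (A j)" "0 \<le> p j" "A j * M = 0\<^sub>m d d" "M * A j = 0\<^sub>m d d" using insert.prems by auto
  have Ajc: "A j \<in> carrier_mat d d" using Aj psd_carrier by auto
  have IH: "psd d (wsum d p A J)" "wsum d p A J * M = 0\<^sub>m d d" "M * wsum d p A J = 0\<^sub>m d d"
    "tr (wsum d p A J) = (\<Sum>j\<in>J. complex_of_real (p j) * tr (A j))"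
    using insert.IH insert.prems by auto
  have eq: "wsum d p A (insert j J) = complex_of_real (p j) \<cdot>\<^sub>m A j + wsum d p A J"
    by (rule wsum_insert) (use insert.hyps Ajc in auto)
  have "psd d (wsum d p A (insert j J))" unfolding eq by (intro psd_add psd_smult Aj IH)
  moreover have "wsum d p A (insert j J) * M = 0\<^sub>m d d"
    unfolding eq using Ajc M IH Aj by (simp add: add_mult_distrib_mat[of _ d d _ _ d] mult_smult_assoc_mat[of _ d d _ d])
  moreover have "M * wsum d p A (insert j J) = 0\<^sub>m d d"
    unfolding eq using Ajc M IH Aj by (simp add: mult_add_distrib_mat[of _ d d _ d] mult_smult_distrib[of _ d d _ d])
  moreover have "tr (wsum d p A (insert j J)) = (\<Sum>j\<in>insert j J. complex_of_real (p j) * tr (A j))"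
    unfolding eq using Ajc IH insert.hyps by (simp add: tr_add[of _ d] tr_smult[OF Ajc])
  ultimately show ?case by blast
qed

lemma generic:
  fixes d n :: nat and rho :: "nat \<Rightarrow> complex mat" and p :: "nat \<Rightarrow> real" and eps :: real
    and F :: "complex mat \<Rightarrow> complex mat \<Rightarrow> real"
  assumes FL: "\<And>\<rho> \<tau>. density d \<rho> \<Longrightarrow> density d \<tau> \<Longrightarrow> \<rho> * \<tau> = 0\<^sub>m d d \<Longrightarrow> \<tau> * \<rho> = 0\<^sub>m d d \<Longrightarrow>
      F \<rho> (complex_of_real eps \<cdot>\<^sub>m \<tau> + complex_of_real (1 - eps) \<cdot>\<^sub>m \<rho>) = 1 - eps"
    and dens: "\<forall>j \<in> {0..n}. density d (rho j)"
    and orth: "\<forall>j \<in> {0..n}. \<forall>k \<in> {0..n}. j \<noteq> k \<longrightarrow> rho j * rho k = 0\<^sub>m d d"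
    and p_nonneg: "\<forall>j \<in> {1..n}. 0 \<le> p j"
    and p_sum: "(\<Sum>j = 1..n. p j) = 1"
  shows "(\<Sum>j = 1..n. p j * F (rho j) (complex_of_real eps \<cdot>\<^sub>m rho 0 + complex_of_real (1 - eps) \<cdot>\<^sub>m rho j))
      = F (wsum d p rho {1..n}) (wsum d p (\<lambda>j. complex_of_real eps \<cdot>\<^sub>m rho 0 + complex_of_real (1 - eps) \<cdot>\<^sub>m rho j) {1..n})
    \<and> F (wsum d p rho {1..n}) (wsum d p (\<lambda>j. complex_of_real eps \<cdot>\<^sub>m rho 0 + complex_of_real (1 - eps) \<cdot>\<^sub>m rho j) {1..n}) = 1 - eps"
proof -
  define r where "r = wsum d p rho {1..n}"
  have d0: "density d (rho 0)" using dens by auto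
  have R0c: "rho 0 \<in> carrier_mat d d" using d0 psd_carrier by (auto simp: density_def)
  have dj: "density d (rho j)" if "j \<in> {1..n}" for j using dens that by auto
  have Rjc: "rho j \<in> carrier_mat d d" if "j \<in> {1..n}" for j using dj[OF that] psd_carrier by (auto simp: density_def)
  have oj: "rho j * rho 0 = 0\<^sub>m d d" "rho 0 * rho j = 0\<^sub>m d d" if "j \<in> {1..n}" for j
    using orth that by auto
  have W: "psd d r \<and> r * rho 0 = 0\<^sub>m d d \<and> rho 0 * r = 0\<^sub>m d d \<and>
     tr r = (\<Sum>j\<in>{1..n}. complex_of_real (p j) * tr (rho j))"
    unfolding r_def
    by (rule wsum_props[OF _ _ R0c]) (use dj oj p_nonneg in \<open>auto simp: density_def\<close>)
  have "tr r = (\<Sum>j\<in>{1..n}. complex_of_real (p j))"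
    using W dj by (auto simp: density_def)
  also have "\<dots> = 1" using p_sum by (simp flip: of_real_sum)
  finally have rd: "density d r" using W by (simp add: density_def)
  have seq: "wsum d p (\<lambda>j. complex_of_real eps \<cdot>\<^sub>m rho 0 + complex_of_real (1 - eps) \<cdot>\<^sub>m rho j) {1..n}
      = complex_of_real eps \<cdot>\<^sub>m rho 0 + complex_of_real (1 - eps) \<cdot>\<^sub>m r"
  proof (rule eq_matI)
    fix i k assume "i < dim_row (complex_of_real eps \<cdot>\<^sub>m rho 0 + complex_of_real (1 - eps) \<cdot>\<^sub>m r)"
      "k < dim_col (complex_of_real eps \<cdot>\<^sub>m rho 0 + complex_of_real (1 - eps) \<cdot>\<^sub>m r)"
    hence i: "i < d" and k: "k < d" using R0c by (auto simp: r_def wsum_def)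
    have "wsum d p (\<lambda>j. complex_of_real eps \<cdot>\<^sub>m rho 0 + complex_of_real (1 - eps) \<cdot>\<^sub>m rho j) {1..n} $$ (i,k)
        = (\<Sum>j\<in>{1..n}. complex_of_real (p j) * (complex_of_real eps * rho 0 $$ (i,k) + complex_of_real (1 - eps) * rho j $$ (i,k)))"
    proof -
      have h: "(complex_of_real eps \<cdot>\<^sub>m rho 0 + complex_of_real (1 - eps) \<cdot>\<^sub>m rho j) $$ (i,k)
          = complex_of_real eps * rho 0 $$ (i,k) + complex_of_real (1 - eps) * rho j $$ (i,k)" if j: "j \<in> {1..n}" for j
        using Rjc[OF j] R0c i k by simp
      show ?thesis unfolding wsum_def using i k by (simp add: h del: of_real_diff)
    qed
    also have "\<dots> = (\<Sum>j\<in>{1..n}. complex_of_real (p j)) * (complex_of_real eps * rho 0 $$ (i,k))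
        + complex_of_real (1 - eps) * (\<Sum>j\<in>{1..n}. complex_of_real (p j) * rho j $$ (i,k))"
      by (simp add: distrib_left sum.distrib sum_distrib_left sum_distrib_right mult_ac del: of_real_diff)
    also have "(\<Sum>j\<in>{1..n}. complex_of_real (p j)) = 1" using p_sum by (simp flip: of_real_sum)
    finally show "wsum d p (\<lambda>j. complex_of_real eps \<cdot>\<^sub>m rho 0 + complex_of_real (1 - eps) \<cdot>\<^sub>m rho j) {1..n} $$ (i,k)
        = (complex_of_real eps \<cdot>\<^sub>m rho 0 + complex_of_real (1 - eps) \<cdot>\<^sub>m r) $$ (i,k)"
      using i k R0c by (simp add: r_def wsum_def)
  qed (use R0c in \<open>auto simp: r_def wsum_def\<close>)
  have Fr: "F r (complex_of_real eps \<cdot>\<^sub>m rho 0 + complex_of_real (1 - eps) \<cdot>\<^sub>m r) = 1 - eps"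
    using FL[OF rd d0] W by simp
  have "(\<Sum>j = 1..n. p j * F (rho j) (complex_of_real eps \<cdot>\<^sub>m rho 0 + complex_of_real (1 - eps) \<cdot>\<^sub>m rho j))
      = (\<Sum>j = 1..n. p j * (1 - eps))"
    by (rule sum.cong) (use FL[OF dj d0] oj in auto)
  also have "\<dots> = 1 - eps" using p_sum by (simp flip: sum_distrib_right)
  finally show ?thesis using Fr seq by (simp add: r_def)
qed

theorem mainTheorem9:
  fixes d n :: nat and rho :: "nat \<Rightarrow> complex mat" and p :: "nat \<Rightarrow> real" and eps :: real
  assumes dens: "\<forall>j \<in> {0..n}. density d (rho j)"
    and orth: "\<forall>j \<in> {0..n}. \<forall>k \<in> {0..n}. j \<noteq> k \<longrightarrow> rho j * rho k = 0\<^sub>m d d"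
    and p_nonneg: "\<forall>j \<in> {1..n}. 0 \<le> p j"
    and p_sum: "(\<Sum>j = 1..n. p j) = 1"
    and eps: "0 \<le> eps" "eps \<le> 1"
  shows "let sig = (\<lambda>j. complex_of_real eps \<cdot>\<^sub>m rho 0 + complex_of_real (1 - eps) \<cdot>\<^sub>m rho j);
             r = wsum d p rho {1..n};
             s = wsum d p sig {1..n}
         in \<forall>F \<in> {fid1, fidQ, fidA}.
              (\<Sum>j = 1..n. p j * F (rho j) (sig j)) = F r s \<and> F r s = 1 - eps"
  unfolding Let_def
  using generic[where F=fid1, OF fid1_lemma[OF _ _ _ _ eps] dens orth p_nonneg p_sum]
    generic[where F=fidQ, OF fidQ_lemma[OF _ _ _ _ eps] dens orth p_nonneg p_sum]
    generic[where F=fidA, OF fidA_lemma[OF _ _ _ _ eps] dens orth p_nonneg p_sum]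
  by auto

end
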